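(* Let $R_{\rm d}$ and $R_{\rm o}$ be real skew-symmetric $n\times n$ matrices such that $R\equiv\sigma^0\otimes R_{\rm d}+\sigma^x\otimes R_{\rm o}=\begin{bmatrix}R_{\rm d}&R_{\rm o}\\R_{\rm o}&R_{\rm d}\end{bmatrix}$ is unitary and $\mathrm{Pf}\,R=-1$. Then $\det R_{\rm d}=0$.
   Context: $\sigma^0$ is the $2\times2$ identity, $\sigma^x=\begin{bmatrix}0&1\\1&0\end{bmatrix}$, and $\mathrm{Pf}$ denotes the Pfaffian. *)

theory Defs
  imports "Jordan_Normal_Form.Determinant"
begin

definition pfaffian :: "real mat \<Rightarrow> real" where
  "pfaffian A = (let m = dim_row A div 2 in
     (\<Sum> p \<in> {p. p permutes {0 ..< 2 * m}}.
        signof p * (\<Prod> i = 0 ..< m. A $$ (p (2 * i), p (2 * i + 1))))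
     / (2 ^ m * fact m))"

definition skew_symmetric :: "real mat \<Rightarrow> bool" where
  "skew_symmetric A \<longleftrightarrow> transpose_mat A = - A"

text \<open>For real matrices, unitary means R R^* = 1 with R^* = R^T (conjugation is trivial).\<close>
definition unitary_real :: "real mat \<Rightarrow> bool" where
  "unitary_real R \<longleftrightarrow> (\<exists>k. R \<in> carrier_mat k k \<and> R * transpose_mat R = 1\<^sub>m k)"

end

theory Submission
  imports Defs
begin


definition pfs :: "nat \<Rightarrow> (nat \<Rightarrow> nat \<Rightarrow> real) \<Rightarrow> real" where
  "pfs m a = (\<Sum> p \<in> {p. p permutes {0 ..< 2 * m}}.
        signof p * (\<Prod> i = 0 ..< m. a (p (2 * i)) (p (2 * i + 1))))"

lemma pfaffian_pfs: "pfaffian A = pfs (dim_row A div 2) (\<lambda>i j. A $$ (i,j)) / (2 ^ (dim_row A div 2) * fact (dim_row A div 2))"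
  unfolding pfaffian_def pfs_def Let_def by simp

lemma pfs_cong:
  assumes "\<And>i j. i < 2*m \<Longrightarrow> j < 2*m \<Longrightarrow> a i j = b i j"
  shows "pfs m a = pfs m b"
  unfolding pfs_def
proof (rule sum.cong[OF refl], rule arg_cong[where f = "\<lambda>x. _ * x"], rule prod.cong[OF refl])
  fix p i assume p: "p \<in> {p. p permutes {0..<2*m}}" and i: "i \<in> {0..<m}"
  have "p (2*i) < 2*m" "p (2*i+1) < 2*m" using p i permutes_in_image[of p "{0..<2*m}"] by auto
  thus "a (p (2 * i)) (p (2 * i + 1)) = b (p (2 * i)) (p (2 * i + 1))" using assms by auto
qed

lemma pfs_scale: "pfs m (\<lambda>i j. c * a i j) = c ^ m * pfs m a"
  unfolding pfs_def sum_distrib_left prod.distrib by (simp add: ac_simps)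

lemma pfs_zero: "pfs 0 a = 1"
  unfolding pfs_def by (simp add: permutes_empty)

lemma perm_split_last:
  fixes h :: "(nat \<Rightarrow> nat) \<Rightarrow> real"
  shows "(\<Sum>p\<in>{p. p permutes {0..<Suc n}}. h p) =
    (\<Sum>j = 0..<Suc n. \<Sum>q\<in>{q. q permutes {0..<n}}. h (permutation_insert n j q))"
proof -
  let ?N = "{0..<Suc n}"
  have nN: "n \<in> ?N" by auto
  have split: "{p. p permutes ?N} = (\<Union>j\<in>?N. {p. p permutes ?N \<and> p n = j})"
    using permutes_in_image[of _ ?N n] by auto
  have disj: "\<forall>j \<in> ?N. \<forall>j' \<in> ?N. j \<noteq> j' \<longrightarrow>
    {p. p permutes ?N \<and> p n = j} \<inter> {p. p permutes ?N \<and> p n = j'} = {}"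
    by auto
  have fin: "\<forall>j\<in>?N. finite {p. p permutes ?N \<and> p n = j}"
    using finite_permutations[of ?N] by auto
  have "(\<Sum>p\<in>{p. p permutes ?N}. h p) = (\<Sum>j\<in>?N. \<Sum>p\<in>{p. p permutes ?N \<and> p n = j}. h p)"
    unfolding split using sum.UNION_disjoint[OF _ fin disj] by auto
  also have "\<dots> = (\<Sum>j\<in>?N. \<Sum>q\<in>{q. q permutes {0..<n}}. h (permutation_insert n j q))"
  proof (rule sum.cong[OF refl])
    fix j assume j: "j \<in> ?N"
    have "(\<Sum>p\<in>{p. p permutes ?N \<and> p n = j}. h p) = sum h (permutation_insert n j ` {q. q permutes {0..<n}})"
      using permutation_fix[of n n j] j by auto
    also have "\<dots> = sum (h \<circ> permutation_insert n j) {q. q permutes {0..<n}}"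
      by (rule sum.reindex, rule permutation_insert_inj_on, insert j, auto)
    finally show "(\<Sum>p\<in>{p. p permutes ?N \<and> p n = j}. h p) = (\<Sum>q\<in>{q. q permutes {0..<n}}. h (permutation_insert n j q))" by simp
  qed
  finally show ?thesis .
qed

lemma permutation_insert_lt: "i' < n \<Longrightarrow> permutation_insert n j q i' = insert_index j (q i')"
  unfolding permutation_insert_expand insert_index_def by auto

definition gg :: "nat \<Rightarrow> nat \<Rightarrow> nat \<Rightarrow> nat" where
  "gg y x r = insert_index y (insert_index x r)"

lemma pfs_expand:
  "pfs (Suc m) a = (\<Sum>y = 0..<2*m+2. \<Sum>x = 0..<2*m+1.
     (-1) ^ (y + x + 1) * a (insert_index y x) y * pfs m (\<lambda>r c. a (gg y x r) (gg y x c)))"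
proof -
  define h where "h = (\<lambda>p. signof p * (\<Prod> i = 0 ..< Suc m. a (p (2 * i)) (p (2 * i + 1))) :: real)"
  have "pfs (Suc m) a = (\<Sum>p\<in>{p. p permutes {0..<Suc (Suc (2*m))}}. h p)"
    unfolding pfs_def h_def by simp
  also have "\<dots> = (\<Sum>y = 0..<Suc (Suc (2*m)). \<Sum>q\<in>{q. q permutes {0..<Suc (2*m)}}. h (permutation_insert (Suc (2*m)) y q))"
    by (rule perm_split_last)
  also have "\<dots> = (\<Sum>y = 0..<Suc (Suc (2*m)). \<Sum>x = 0..<Suc (2*m). \<Sum>q\<in>{q. q permutes {0..<2*m}}.
      h (permutation_insert (Suc (2*m)) y (permutation_insert (2*m) x q)))"
    by (rule sum.cong[OF refl], rule perm_split_last)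
  also have "\<dots> = (\<Sum>y = 0..<2*m+2. \<Sum>x = 0..<2*m+1.
     (-1) ^ (y + x + 1) * a (insert_index y x) y * pfs m (\<lambda>r c. a (gg y x r) (gg y x c)))"
  proof (rule sum.cong, simp, rule sum.cong, simp)
    fix y x assume y: "y \<in> {0..<2*m+2}" and x: "x \<in> {0..<2*m+1}"
    have yl: "y < Suc (Suc (2*m))" and xl: "x < Suc (2*m)" using x y by auto
    show "(\<Sum>q\<in>{q. q permutes {0..<2*m}}. h (permutation_insert (Suc (2*m)) y (permutation_insert (2*m) x q))) =
      (-1) ^ (y + x + 1) * a (insert_index y x) y * pfs m (\<lambda>r c. a (gg y x r) (gg y x c))"
      unfolding pfs_def sum_distrib_left
    proof (rule sum.cong[OF refl])
      fix q assume "q \<in> {q. q permutes {0..<2*m}}"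
      hence q: "q permutes {0..<2*m}" by auto
      let ?q1 = "permutation_insert (2*m) x q"
      let ?p = "permutation_insert (Suc (2*m)) y ?q1"
      have q1: "?q1 permutes {0..<Suc (2*m)}" by (rule permutation_insert_permutes[OF q], insert xl, auto)
      have s1: "signof ?p = (-1::real)^(Suc (2*m) + y) * signof ?q1"
        by (rule signof_permutation_insert[OF q1 _ yl], simp)
      have s2: "signof ?q1 = (-1::real)^(2*m + x) * signof q"
        by (rule signof_permutation_insert[OF q _ xl], simp)
      have sgn: "signof ?p = (-1::real)^(y+x+1) * signof q"
      proof -
        have "signof ?p = (-1::real)^(Suc (2*m) + y) * (-1::real)^(2*m + x) * signof q" using s1 s2 by simp
        also have "(-1::real)^(Suc (2*m) + y) * (-1::real)^(2*m + x) = (-1)^(2*(2*m)) * (-1::real)^(y+x+1)"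
          unfolding power_add[symmetric] by (rule arg_cong[where f = "\<lambda>k. (-1::real)^k"], simp)
        also have "(-1::real)^(2*(2*m)) = 1" by (simp add: power_mult)
        finally show ?thesis by simp
      qed
      have pl: "?p (Suc (2*m)) = y" by simp
      have pm: "?p (2*m) = insert_index y x" by (simp add: permutation_insert_lt)
      have pi: "\<And>i. i < 2*m \<Longrightarrow> ?p i = gg y x (q i)"
        by (simp add: permutation_insert_lt gg_def)
      have "h ?p = signof ?p * ((\<Prod> i = 0 ..< m. a (?p (2 * i)) (?p (2 * i + 1))) * a (?p (2*m)) (?p (2*m+1)))"
        unfolding h_def by simp
      also have "(\<Prod> i = 0 ..< m. a (?p (2 * i)) (?p (2 * i + 1))) = (\<Prod> i = 0 ..< m. a (gg y x (q (2 * i))) (gg y x (q (2 * i + 1))))"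
        by (rule prod.cong[OF refl], simp add: pi)
      finally show "h ?p = (-1) ^ (y + x + 1) * a (insert_index y x) y * (signof q * (\<Prod> i = 0 ..< m. a (gg y x (q (2 * i))) (gg y x (q (2 * i + 1)))))"
        unfolding sgn using pl pm by simp
    qed
  qed
  finally show ?thesis .
qed

lemma pfs_one: "pfs 1 a = a 0 1 - a 1 0"
  using pfs_expand[of 0 a] by (simp add: pfs_zero insert_index_def)

definition bd :: "(nat \<Rightarrow> nat \<Rightarrow> real) \<Rightarrow> (nat \<Rightarrow> nat \<Rightarrow> real) \<Rightarrow> nat \<Rightarrow> nat \<Rightarrow> nat \<Rightarrow> real" where
  "bd X Y a r c = (if r < 2*a \<and> c < 2*a then X r c else if 2*a \<le> r \<and> 2*a \<le> c then Y (r - 2*a) (c - 2*a) else 0)"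

lemma ins_shift: "k \<le> y \<Longrightarrow> k \<le> z \<Longrightarrow> k \<le> insert_index y z \<and> insert_index y z - k = insert_index (y-k) (z-k)"
  unfolding insert_index_def by auto

lemma ins_low: "z < k \<Longrightarrow> k \<le> y \<Longrightarrow> insert_index y z = z"
  unfolding insert_index_def by auto

lemma gg_B:
  assumes "y < 2 * Suc a'" "x < 2*a'+1"
  shows "r < 2*a' \<Longrightarrow> gg y x r < 2 * Suc a'" "2*a' \<le> r \<Longrightarrow> gg y x r = r + 2"
    "insert_index y x < 2 * Suc a'"
  using assms unfolding gg_def insert_index_def by auto

lemma gg_C:
  assumes "k \<le> y" "k \<le> x"
  shows "r < k \<Longrightarrow> gg y x r = r" "k \<le> r \<Longrightarrow> k \<le> gg y x r \<and> gg y x r - k = gg (y-k) (x-k) (r-k)"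
  using assms unfolding gg_def insert_index_def by auto

lemma pfs_block_step:
  assumes IH: "\<And>a b X Y. a + b = m \<Longrightarrow> pfs m (bd X Y a) = real (m choose a) * pfs a X * pfs b Y"
    and ab: "Suc a' + Suc b' = Suc m"
  shows "pfs (Suc m) (bd X Y (Suc a')) = real (Suc m choose Suc a') * pfs (Suc a') X * pfs (Suc b') Y"
proof -
  define a where "a = Suc a'"
  define b where "b = Suc b'"
  define d where "d = bd X Y a"
  define T where "T = (\<lambda>y x. (-1) ^ (y + x + 1) * d (insert_index y x) y * pfs m (\<lambda>r c. d (gg y x r) (gg y x c)))"
  have m: "m = a' + b' + 1" using ab by simp
  have e1: "pfs (Suc m) d = (\<Sum>y = 0..<2*m+2. \<Sum>x = 0..<2*m+1. T y x)"
    unfolding T_def by (rule pfs_expand)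
  have split_y: "(\<Sum>y = 0..<2*m+2. \<Sum>x = 0..<2*m+1. T y x) =
      (\<Sum>y = 0..<2*a. \<Sum>x = 0..<2*m+1. T y x) + (\<Sum>y = 2*a..<2*m+2. \<Sum>x = 0..<2*m+1. T y x)"
    by (rule sum.atLeastLessThan_concat[symmetric], auto simp: a_def m)
  have B: "(\<Sum>y = 0..<2*a. \<Sum>x = 0..<2*m+1. T y x) = real (m choose a') * pfs b Y * pfs a X"
  proof -
    have "(\<Sum>y = 0..<2*a. \<Sum>x = 0..<2*m+1. T y x) = (\<Sum>y = 0..<2*a. \<Sum>x = 0..<2*a'+1. T y x)"
    proof (rule sum.cong[OF refl])
      fix y assume y: "y \<in> {0..<2*a}"
      have "(\<Sum>x = 0..<2*m+1. T y x) = (\<Sum>x = 0..<2*a'+1. T y x) + (\<Sum>x = 2*a'+1..<2*m+1. T y x)"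
        by (rule sum.atLeastLessThan_concat[symmetric], auto simp: m)
      also have "(\<Sum>x = 2*a'+1..<2*m+1. T y x) = 0"
      proof (rule sum.neutral, rule ballI)
        fix x assume x: "x \<in> {2*a'+1..<2*m+1}"
        have "2*a \<le> insert_index y x" using x y unfolding insert_index_def a_def by auto
        hence "d (insert_index y x) y = 0" using y unfolding d_def bd_def by auto
        thus "T y x = 0" unfolding T_def by simp
      qed
      finally show "(\<Sum>x = 0..<2*m+1. T y x) = (\<Sum>x = 0..<2*a'+1. T y x)" by simp
    qed
    also have "\<dots> = (\<Sum>y = 0..<2*a'+2. \<Sum>x = 0..<2*a'+1. real (m choose a') * pfs b Y *
        ((-1) ^ (y + x + 1) * X (insert_index y x) y * pfs a' (\<lambda>r c. X (gg y x r) (gg y x c))))"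
    proof (rule sum.cong, simp add: a_def, rule sum.cong[OF refl])
      fix y x assume y: "y \<in> {0..<2*a'+2}" and x: "x \<in> {0..<2*a'+1}"
      have y': "y < 2 * Suc a'" and x': "x < 2*a'+1" using x y by auto
      note G = gg_B[OF y' x']
      have "d (insert_index y x) y = X (insert_index y x) y"
        using G(3) y' unfolding d_def bd_def a_def by auto
      moreover have "pfs m (\<lambda>r c. d (gg y x r) (gg y x c)) = pfs m (bd (\<lambda>r c. X (gg y x r) (gg y x c)) Y a')"
      proof (rule pfs_cong)
        fix r c
        show "d (gg y x r) (gg y x c) = bd (\<lambda>r c. X (gg y x r) (gg y x c)) Y a' r c"
          unfolding d_def bd_def a_def
          using G(1)[of r] G(1)[of c] G(2)[of r] G(2)[of c]
          by (cases "r < 2*a'"; cases "c < 2*a'"; auto simp: not_less)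
      qed
      moreover have "\<dots> = real (m choose a') * pfs a' (\<lambda>r c. X (gg y x r) (gg y x c)) * pfs b Y"
        by (rule IH, simp add: m b_def)
      ultimately show "T y x = real (m choose a') * pfs b Y *
        ((-1) ^ (y + x + 1) * X (insert_index y x) y * pfs a' (\<lambda>r c. X (gg y x r) (gg y x c)))"
        unfolding T_def by simp
    qed
    also have "\<dots> = real (m choose a') * pfs b Y * pfs a X"
      unfolding a_def pfs_expand[of a' X] sum_distrib_left by simp
    finally show ?thesis .
  qed
  have C: "(\<Sum>y = 2*a..<2*m+2. \<Sum>x = 0..<2*m+1. T y x) = real (m choose a) * pfs a X * pfs b Y"
  proof -
    have "(\<Sum>y = 2*a..<2*m+2. \<Sum>x = 0..<2*m+1. T y x) = (\<Sum>y = 2*a..<2*m+2. \<Sum>x = 2*a..<2*m+1. T y x)"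
    proof (rule sum.cong[OF refl])
      fix y assume y: "y \<in> {2*a..<2*m+2}"
      have "(\<Sum>x = 0..<2*m+1. T y x) = (\<Sum>x = 0..<2*a. T y x) + (\<Sum>x = 2*a..<2*m+1. T y x)"
        by (rule sum.atLeastLessThan_concat[symmetric], auto simp: m a_def)
      also have "(\<Sum>x = 0..<2*a. T y x) = 0"
      proof (rule sum.neutral, rule ballI)
        fix x assume x: "x \<in> {0..<2*a}"
        have "insert_index y x = x" using x y by (intro ins_low[of _ "2*a"]) auto
        hence "d (insert_index y x) y = 0" using x y unfolding d_def bd_def by auto
        thus "T y x = 0" unfolding T_def by simp
      qed
      finally show "(\<Sum>x = 0..<2*m+1. T y x) = (\<Sum>x = 2*a..<2*m+1. T y x)" by simp
    qed
    also have "\<dots> = (\<Sum>y = 0 + 2*a..<2*b + 2*a. \<Sum>x = 0 + 2*a..<(2*b'+1) + 2*a. T y x)"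
    proof -
      have "2*m+2 = 2*b + 2*a" "2*m+1 = (2*b'+1) + 2*a" "2*a = 0 + 2*a" by (simp_all add: m a_def b_def)
      thus ?thesis by metis
    qed
    also have "\<dots> = (\<Sum>y = 0..<2*b. \<Sum>x = 0..<2*b'+1. T (y + 2*a) (x + 2*a))"
      unfolding sum.shift_bounds_nat_ivl by simp
    also have "\<dots> = (\<Sum>y = 0..<2*b'+2. \<Sum>x = 0..<2*b'+1. real (m choose a) * pfs a X *
        ((-1) ^ (y + x + 1) * Y (insert_index y x) y * pfs b' (\<lambda>r c. Y (gg y x r) (gg y x c))))"
    proof (rule sum.cong, simp add: b_def, rule sum.cong[OF refl])
      fix y x assume y: "y \<in> {0..<2*b'+2}" and x: "x \<in> {0..<2*b'+1}"
      let ?y = "y + 2*a" and ?x = "x + 2*a"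
      have s: "(-1::real) ^ (?y + ?x + 1) = (-1) ^ (y + x + 1)"
      proof -
        have "?y + ?x + 1 = (y + x + 1) + 2 * (2*a)" by simp
        thus ?thesis by (simp only: power_add power_mult) simp
      qed
      have ins: "2*a \<le> insert_index ?y ?x \<and> insert_index ?y ?x - 2*a = insert_index y x"
        using ins_shift[of "2*a" ?y ?x] by simp
      have "d (insert_index ?y ?x) ?y = Y (insert_index y x) y"
        using ins unfolding d_def bd_def by auto
      moreover have "pfs m (\<lambda>r c. d (gg ?y ?x r) (gg ?y ?x c)) = pfs m (bd X (\<lambda>r c. Y (gg y x r) (gg y x c)) a)"
      proof (rule pfs_cong)
        fix r c
        have g1: "r < 2*a \<Longrightarrow> gg ?y ?x r = r" for r by (rule gg_C(1)) auto
        have g2: "2*a \<le> r \<Longrightarrow> 2*a \<le> gg ?y ?x r \<and> gg ?y ?x r - 2*a = gg y x (r - 2*a)" for r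
          using gg_C(2)[of "2*a" ?y ?x r] by simp
        show "d (gg ?y ?x r) (gg ?y ?x c) = bd X (\<lambda>r c. Y (gg y x r) (gg y x c)) a r c"
          unfolding d_def bd_def
          using g1[of r] g1[of c] g2[of r] g2[of c]
          by (cases "r < 2*a"; cases "c < 2*a"; auto simp: not_less)
      qed
      moreover have "\<dots> = real (m choose a) * pfs a X * pfs b' (\<lambda>r c. Y (gg y x r) (gg y x c))"
        by (rule IH, simp add: m a_def)
      ultimately show "T ?y ?x = real (m choose a) * pfs a X *
        ((-1) ^ (y + x + 1) * Y (insert_index y x) y * pfs b' (\<lambda>r c. Y (gg y x r) (gg y x c)))"
        unfolding T_def s by simp
    qed
    also have "\<dots> = real (m choose a) * pfs a X * pfs b Y"
      unfolding b_def pfs_expand[of b' Y] sum_distrib_left by simp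
    finally show ?thesis .
  qed
  have "pfs (Suc m) (bd X Y (Suc a')) = real (m choose a') * pfs b Y * pfs a X + real (m choose a) * pfs a X * pfs b Y"
    using e1 split_y B C unfolding d_def a_def by simp
  also have "\<dots> = real (Suc m choose Suc a') * pfs a X * pfs b Y"
    by (simp add: a_def algebra_simps)
  finally show ?thesis unfolding a_def b_def .
qed

lemma pfs_block_aux: "a + b = m \<Longrightarrow> pfs m (bd X Y a) = real (m choose a) * pfs a X * pfs b Y"
proof (induction m arbitrary: a b X Y)
  case 0
  thus ?case by (simp add: pfs_zero)
next
  case (Suc m)
  show ?case
  proof (cases "a = 0")
    case True
    hence "pfs (Suc m) (bd X Y a) = pfs (Suc m) Y" by (intro pfs_cong) (simp add: bd_def)
    thus ?thesis using True Suc.prems by (simp add: pfs_zero)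
  next
    case a: False
    show ?thesis
    proof (cases "b = 0")
      case True
      hence "pfs (Suc m) (bd X Y a) = pfs (Suc m) X" using Suc.prems by (intro pfs_cong) (simp add: bd_def)
      thus ?thesis using True Suc.prems by (simp add: pfs_zero)
    next
      case False
      then obtain a' b' where "a = Suc a'" "b = Suc b'" using a not0_implies_Suc by blast
      thus ?thesis using pfs_block_step[of m a' b' X Y] Suc by simp
    qed
  qed
qed

lemma pfs_block: "pfs (a+b) (bd X Y a) = real ((a+b) choose a) * pfs a X * pfs b Y"
  by (rule pfs_block_aux) simp

definition jstd :: "nat \<Rightarrow> nat \<Rightarrow> real" where
  "jstd r c = (if even r \<and> c = Suc r then 1 else if odd r \<and> r = Suc c then -1 else 0)"

lemma jstd_block: "jstd r c = bd jstd jstd 1 r c"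
proof -
  consider "r < 2 \<and> c < 2" | "2 \<le> r \<and> 2 \<le> c" | "r < 2 \<and> 2 \<le> c" | "2 \<le> r \<and> c < 2" by linarith
  thus ?thesis
  proof cases
    case 2
    then obtain r' c' where "r = r' + 2" "c = c' + 2" by (metis add.commute le_Suc_ex)
    thus ?thesis unfolding bd_def jstd_def by auto
  next
    case 1 thus ?thesis unfolding bd_def jstd_def by auto
  next
    case 3
    hence "r = 0 \<or> r = 1" by auto
    thus ?thesis using 3 unfolding bd_def jstd_def by auto
  next
    case 4
    hence "c = 0 \<or> c = 1" by auto
    thus ?thesis using 4 unfolding bd_def jstd_def by auto
  qed
qed

lemma pfs_jstd: "pfs m jstd \<noteq> 0"
proof (induction m)
  case 0 thus ?case by (simp add: pfs_zero)
next
  case (Suc m)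
  have e: "bd jstd jstd 1 = jstd" by (intro ext) (simp only: jstd_block[symmetric])
  have "pfs (Suc m) jstd = pfs (1 + m) (bd jstd jstd 1)" unfolding e by simp
  also have "\<dots> = real ((1+m) choose 1) * pfs 1 jstd * pfs m jstd" by (rule pfs_block)
  also have "pfs 1 jstd = 2" unfolding pfs_one jstd_def by simp
  finally show ?case using Suc by simp
qed

lemma pfs_reindex:
  assumes pi: "pp permutes {0..<2*m}"
  shows "pfs m (\<lambda>i j. a (pp i) (pp j)) = signof pp * pfs m a"
proof -
  let ?P = "{p. p permutes {0..<2*m}}"
  define G where "G = (\<lambda>p. signof p * (\<Prod> i = 0 ..< m. a (p (2 * i)) (p (2 * i + 1))) :: real)"
  have bij: "bij_betw (\<lambda>q. pp \<circ> q) ?P ?P"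
  proof (rule bij_betw_byWitness[where f' = "\<lambda>q. inv_into UNIV pp \<circ> q"])
    show "\<forall>q\<in>?P. inv_into UNIV pp \<circ> (pp \<circ> q) = q" using permutes_inv_o(2)[OF pi] by (simp add: o_assoc)
    show "\<forall>q\<in>?P. pp \<circ> (inv_into UNIV pp \<circ> q) = q" using permutes_inv_o(1)[OF pi] by (simp add: o_assoc)
    show "(\<lambda>q. pp \<circ> q) ` ?P \<subseteq> ?P" using permutes_compose[OF _ pi] by auto
    show "(\<lambda>q. inv_into UNIV pp \<circ> q) ` ?P \<subseteq> ?P" using permutes_compose[OF _ permutes_inv[OF pi]] by auto
  qed
  have "pfs m a = sum G ?P" unfolding pfs_def G_def by simp
  also have "\<dots> = (\<Sum>q\<in>?P. G (pp \<circ> q))" by (rule sum.reindex_bij_betw[OF bij, symmetric])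
  also have "\<dots> = (\<Sum>q\<in>?P. signof pp * (signof q * (\<Prod> i = 0 ..< m. a (pp (q (2 * i))) (pp (q (2 * i + 1))))))"
  proof (rule sum.cong[OF refl])
    fix q assume "q \<in> ?P"
    hence q: "q permutes {0..<2*m}" by simp
    have "signof (pp \<circ> q) = (signof pp * signof q :: real)" by (rule signof_compose[OF pi q])
    thus "G (pp \<circ> q) = signof pp * (signof q * (\<Prod> i = 0 ..< m. a (pp (q (2 * i))) (pp (q (2 * i + 1)))))"
      unfolding G_def by simp
  qed
  also have "\<dots> = signof pp * pfs m (\<lambda>i j. a (pp i) (pp j))"
    unfolding pfs_def sum_distrib_left by simp
  finally have "pfs m a = signof pp * pfs m (\<lambda>i j. a (pp i) (pp j))" .
  hence "signof pp * pfs m a = (signof pp * signof pp) * pfs m (\<lambda>i j. a (pp i) (pp j))" by simp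
  moreover have "(signof pp * signof pp :: real) = 1"
  proof -
    have "(signof pp :: real) = 1 \<or> (signof pp :: real) = -1" using signof_pm_one[of pp] by auto
    thus ?thesis by auto
  qed
  ultimately show ?thesis by simp
qed

lemma prod_pairs: "(\<Prod>i = 0..<(m::nat). f (2*i) * f (2*i+1)) = (\<Prod>j = 0..<2*m. (f j :: real))"
proof (induction m)
  case (Suc m)
  have "(\<Prod>j = 0..<2*Suc m. f j) = (\<Prod>j = 0..<Suc (Suc (2*m)). f j)" by simp
  also have "\<dots> = (\<Prod>j = 0..<2*m. f j) * f (2*m) * f (2*m+1)" by simp
  finally show ?case using Suc by simp
qed simp

definition colf :: "(nat \<Rightarrow> nat \<times> nat) \<Rightarrow> nat \<Rightarrow> nat" where
  "colf h j = (if even j then fst (h (j div 2)) else snd (h (j div 2)))"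

definition permof :: "nat \<Rightarrow> (nat \<Rightarrow> nat \<times> nat) \<Rightarrow> nat \<Rightarrow> nat" where
  "permof n h j = (if j < n then colf h j else j)"

definition hof :: "nat \<Rightarrow> (nat \<Rightarrow> nat) \<Rightarrow> nat \<Rightarrow> nat \<times> nat" where
  "hof m p i = (if i < m then (p (2*i), p (2*i+1)) else undefined)"

lemma colf_even[simp]: "colf h (2*i) = fst (h i)" and colf_odd[simp]: "colf h (2*i+1) = snd (h i)"
  and colf_odd'[simp]: "colf h (Suc (2*i)) = snd (h i)"
  unfolding colf_def by auto

lemma colf_range:
  assumes h: "h \<in> PiE {0..<m} (\<lambda>_. {0..<2*m} \<times> {0..<2*m})" and j: "j < 2*m"
  shows "colf h j < 2*m"
proof -
  have "j div 2 < m" using j by auto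
  hence "h (j div 2) \<in> {0..<2*m} \<times> {0..<2*m}" using PiE_mem[OF h, of "j div 2"] by auto
  thus ?thesis unfolding colf_def by auto
qed

lemma colf_hof: assumes "j < 2*m" shows "colf (hof m p) j = p j"
proof -
  have jm: "j div 2 < m" using assms by auto
  have "j = 2 * (j div 2) \<or> j = 2 * (j div 2) + 1" by auto
  thus ?thesis unfolding colf_def hof_def using jm by (auto split: if_splits)
qed

lemma permof_permutes:
  assumes h: "h \<in> PiE {0..<m} (\<lambda>_. {0..<2*m} \<times> {0..<2*m})" and inj: "inj_on (colf h) {0..<2*m}"
  shows "permof (2*m) h permutes {0..<2*m}"
proof (rule bij_imp_permutes)
  let ?S = "{0..<2*m}"
  have "inj_on (permof (2*m) h) ?S = inj_on (colf h) ?S" by (rule inj_on_cong) (simp add: permof_def)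
  hence inj': "inj_on (permof (2*m) h) ?S" using inj by simp
  have sub: "permof (2*m) h ` ?S \<subseteq> ?S" using colf_range[OF h] unfolding permof_def by auto
  have "permof (2*m) h ` ?S = ?S" by (rule endo_inj_surj[OF _ sub inj']) simp
  thus "bij_betw (permof (2*m) h) ?S ?S" using inj' unfolding bij_betw_def by simp
  show "\<And>x. x \<notin> ?S \<Longrightarrow> permof (2 * m) h x = x" unfolding permof_def by auto
qed

lemma hof_bij: "bij_betw (hof m) {p. p permutes {0..<2*m}}
   {h \<in> PiE {0..<m} (\<lambda>_. {0..<2*m} \<times> {0..<2*m}). inj_on (colf h) {0..<2*m}}"
proof (rule bij_betw_byWitness[where f' = "permof (2*m)"])
  let ?P = "{p. p permutes {0..<2*m}}"
  let ?H = "{h \<in> PiE {0..<m} (\<lambda>_. {0..<2*m} \<times> {0..<2*m}). inj_on (colf h) {0..<2*m}}"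
  show "\<forall>p\<in>?P. permof (2*m) (hof m p) = p"
  proof
    fix p assume "p \<in> ?P"
    hence p: "p permutes {0..<2*m}" by simp
    show "permof (2*m) (hof m p) = p"
    proof
      fix j show "permof (2*m) (hof m p) j = p j"
        unfolding permof_def using colf_hof[of j m p] permutes_not_in[OF p, of j] by auto
    qed
  qed
  show "\<forall>h\<in>?H. hof m (permof (2*m) h) = h"
  proof
    fix h assume "h \<in> ?H"
    hence h: "h \<in> PiE {0..<m} (\<lambda>_. {0..<2*m} \<times> {0..<2*m})" by simp
    show "hof m (permof (2*m) h) = h"
    proof
      fix i show "hof m (permof (2*m) h) i = h i"
      proof (cases "i < m")
        case True
        hence "2*i < 2*m" "2*i+1 < 2*m" by auto
        thus ?thesis unfolding hof_def permof_def using True by simp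
      next
        case False thus ?thesis unfolding hof_def using h by (auto simp: PiE_def extensional_def)
      qed
    qed
  qed
  show "hof m ` ?P \<subseteq> ?H"
  proof
    fix h assume "h \<in> hof m ` ?P"
    then obtain p where p: "p permutes {0..<2*m}" and hp: "h = hof m p" by auto
    have "h \<in> PiE {0..<m} (\<lambda>_. {0..<2*m} \<times> {0..<2*m})"
    proof -
      have "\<And>i. i < m \<Longrightarrow> p (2*i) < 2*m \<and> p (2*i+1) < 2*m"
      proof -
        fix i assume "i < m"
        hence "2*i \<in> {0..<2*m}" "2*i+1 \<in> {0..<2*m}" by auto
        thus "p (2*i) < 2*m \<and> p (2*i+1) < 2*m" using permutes_in_image[OF p] by auto
      qed
      thus ?thesis unfolding hp hof_def by (auto simp: PiE_def extensional_def)
    qed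
    moreover have "inj_on (colf h) {0..<2*m}"
    proof -
      have "inj_on p {0..<2*m}" using permutes_inj_on[OF p] .
      moreover have "inj_on (colf h) {0..<2*m} = inj_on p {0..<2*m}"
        unfolding hp by (rule inj_on_cong) (simp add: colf_hof)
      ultimately show ?thesis by simp
    qed
    ultimately show "h \<in> ?H" by simp
  qed
  show "permof (2*m) ` ?H \<subseteq> ?P" using permof_permutes by auto
qed

lemma det_colf:
  fixes M :: "nat \<Rightarrow> nat \<Rightarrow> real"
  assumes h: "h \<in> PiE {0..<m} (\<lambda>_. {0..<2*m} \<times> {0..<2*m})"
  shows "det (mat (2*m) (2*m) (\<lambda>(r,c). M r (colf h c))) =
    (if inj_on (colf h) {0..<2*m} then signof (permof (2*m) h) * det (mat (2*m) (2*m) (\<lambda>(r,c). M r c)) else 0)"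
proof (cases "inj_on (colf h) {0..<2*m}")
  case True
  let ?n = "2*m"
  let ?pf = "permof ?n h"
  let ?Mm = "mat ?n ?n (\<lambda>(r,c). M r c)"
  let ?Mt = "transpose_mat ?Mm"
  have pf: "?pf permutes {0..<?n}" by (rule permof_permutes[OF h True])
  have Mt: "?Mt \<in> carrier_mat ?n ?n" by simp
  have eq: "transpose_mat (mat ?n ?n (\<lambda>(r,c). M r (colf h c))) = mat ?n ?n (\<lambda>(i,j). ?Mt $$ (?pf i, j))"
  proof (rule eq_matI)
    fix i j assume i: "i < dim_row (mat ?n ?n (\<lambda>(i,j). ?Mt $$ (?pf i, j)))" and j: "j < dim_col (mat ?n ?n (\<lambda>(i,j). ?Mt $$ (?pf i, j)))"
    have "?pf i < ?n" using pf i permutes_in_image[OF pf, of i] by simp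
    thus "transpose_mat (mat ?n ?n (\<lambda>(r,c). M r (colf h c))) $$ (i, j) = mat ?n ?n (\<lambda>(i,j). ?Mt $$ (?pf i, j)) $$ (i, j)"
      using i j unfolding permof_def by simp
  qed auto
  have "det (mat ?n ?n (\<lambda>(r,c). M r (colf h c))) = det (transpose_mat (mat ?n ?n (\<lambda>(r,c). M r (colf h c))))"
    by (subst det_transpose, auto)
  also have "\<dots> = signof ?pf * det ?Mt" unfolding eq by (rule det_permute_rows[OF Mt pf])
  also have "det ?Mt = det ?Mm" by (subst det_transpose, auto)
  finally show ?thesis using True by simp
next
  case False
  then obtain j1 j2 where j: "j1 < 2*m" "j2 < 2*m" "j1 \<noteq> j2" "colf h j1 = colf h j2"
    unfolding inj_on_def by auto
  have "det (mat (2*m) (2*m) (\<lambda>(r,c). M r (colf h c))) = 0"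
    by (rule det_identical_columns[OF _ j(3) j(1) j(2)], simp, insert j, simp)
  thus ?thesis using False by simp
qed

lemma pfs_congruence:
  fixes M a :: "nat \<Rightarrow> nat \<Rightarrow> real"
  shows "pfs m (\<lambda>i j. \<Sum>k = 0..<2*m. (\<Sum>l = 0..<2*m. M i l * a l k) * M j k) =
    det (mat (2*m) (2*m) (\<lambda>(i,j). M i j)) * pfs m a"
proof -
  let ?n = "2*m"
  let ?K = "{0..<?n} \<times> {0..<?n}"
  let ?I = "{0..<m}"
  let ?PI = "PiE ?I (\<lambda>_. ?K)"
  let ?P = "{p. p permutes {0..<?n}}"
  let ?Mm = "mat ?n ?n (\<lambda>(i,j). M i j)"
  let ?H = "{h \<in> ?PI. inj_on (colf h) {0..<?n}}"
  define c where "c = (\<lambda>i j. \<Sum>k = 0..<2*m. (\<Sum>l = 0..<2*m. M i l * a l k) * M j k)"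
  define f where "f = (\<lambda>p (i::nat) lk. M (p (2*i)) (fst lk) * a (fst lk) (snd lk) * M (p (2*i+1)) (snd lk))"
  have c_eq: "c i j = (\<Sum>lk\<in>?K. M i (fst lk) * a (fst lk) (snd lk) * M j (snd lk))" for i j
  proof -
    have "c i j = (\<Sum>k = 0..<?n. \<Sum>l = 0..<?n. M i l * a l k * M j k)"
      unfolding c_def by (simp add: sum_distrib_right)
    also have "\<dots> = (\<Sum>l = 0..<?n. \<Sum>k = 0..<?n. M i l * a l k * M j k)" by (rule sum.swap)
    also have "\<dots> = (\<Sum>lk\<in>?K. M i (fst lk) * a (fst lk) (snd lk) * M j (snd lk))"
      by (simp add: sum.cartesian_product case_prod_beta)
    finally show ?thesis .
  qed
  have "pfs m c = (\<Sum>p\<in>?P. signof p * (\<Prod>i\<in>?I. \<Sum>lk\<in>?K. f p i lk))"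
    unfolding pfs_def c_eq f_def by simp
  also have "\<dots> = (\<Sum>p\<in>?P. signof p * (\<Sum>h\<in>?PI. \<Prod>i\<in>?I. f p i (h i)))"
    by (subst prod_sum_PiE, auto)
  also have "\<dots> = (\<Sum>h\<in>?PI. \<Sum>p\<in>?P. signof p * (\<Prod>i\<in>?I. f p i (h i)))"
    unfolding sum_distrib_left by (rule sum.swap)
  also have "\<dots> = (\<Sum>h\<in>?PI. (\<Prod>i\<in>?I. a (fst (h i)) (snd (h i))) * det (mat ?n ?n (\<lambda>(r,c). M r (colf h c))))"
  proof (rule sum.cong[OF refl])
    fix h assume h: "h \<in> ?PI"
    have "(\<Sum>p\<in>?P. signof p * (\<Prod>i\<in>?I. f p i (h i))) =
       (\<Sum>p\<in>?P. (\<Prod>i\<in>?I. a (fst (h i)) (snd (h i))) * (signof p * (\<Prod>j = 0..<?n. M (p j) (colf h j))))"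
    proof (rule sum.cong[OF refl])
      fix p assume p: "p \<in> ?P"
      have "(\<Prod>i\<in>?I. f p i (h i)) = (\<Prod>i\<in>?I. a (fst (h i)) (snd (h i))) * (\<Prod>i\<in>?I. M (p (2*i)) (colf h (2*i)) * M (p (2*i+1)) (colf h (2*i+1)))"
        unfolding f_def prod.distrib[symmetric] by (rule prod.cong[OF refl]) simp
      also have "(\<Prod>i\<in>?I. M (p (2*i)) (colf h (2*i)) * M (p (2*i+1)) (colf h (2*i+1))) = (\<Prod>j = 0..<?n. M (p j) (colf h j))"
        by (rule prod_pairs)
      finally show "signof p * (\<Prod>i\<in>?I. f p i (h i)) = (\<Prod>i\<in>?I. a (fst (h i)) (snd (h i))) * (signof p * (\<Prod>j = 0..<?n. M (p j) (colf h j)))"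
        by simp
    qed
    also have "\<dots> = (\<Prod>i\<in>?I. a (fst (h i)) (snd (h i))) * (\<Sum>p\<in>?P. signof p * (\<Prod>j = 0..<?n. M (p j) (colf h j)))"
      by (simp add: sum_distrib_left)
    also have "(\<Sum>p\<in>?P. signof p * (\<Prod>j = 0..<?n. M (p j) (colf h j))) = det (mat ?n ?n (\<lambda>(r,c). M r (colf h c)))"
    proof -
      have "det (mat ?n ?n (\<lambda>(r,c). M r (colf h c))) = (\<Sum>p\<in>?P. signof p * (\<Prod>j<?n. mat ?n ?n (\<lambda>(r,c). M r (colf h c)) $$ (p j, j)))"
        by (rule det_col, simp)
      also have "\<dots> = (\<Sum>p\<in>?P. signof p * (\<Prod>j = 0..<?n. M (p j) (colf h j)))"
      proof (rule sum.cong[OF refl])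
        fix p assume p: "p \<in> ?P"
        show "signof p * (\<Prod>j<?n. mat ?n ?n (\<lambda>(r,c). M r (colf h c)) $$ (p j, j)) = signof p * (\<Prod>j = 0..<?n. M (p j) (colf h j))"
          unfolding atLeast0LessThan[symmetric]
        proof (rule arg_cong[where f = "\<lambda>x. _ * x"], rule prod.cong[OF refl])
          fix j assume "j \<in> {0..<?n}"
          moreover hence "p j < ?n" using p permutes_in_image[of p "{0..<?n}" j] by auto
          ultimately show "mat ?n ?n (\<lambda>(r,c). M r (colf h c)) $$ (p j, j) = M (p j) (colf h j)" by simp
        qed
      qed
      finally show ?thesis by simp
    qed
    finally show "(\<Sum>p\<in>?P. signof p * (\<Prod>i\<in>?I. f p i (h i))) = (\<Prod>i\<in>?I. a (fst (h i)) (snd (h i))) * det (mat ?n ?n (\<lambda>(r,c). M r (colf h c)))" .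
  qed
  also have "\<dots> = (\<Sum>h\<in>?PI. if inj_on (colf h) {0..<?n} then (\<Prod>i\<in>?I. a (fst (h i)) (snd (h i))) * signof (permof ?n h) * det ?Mm else 0)"
    by (rule sum.cong[OF refl], subst det_colf, auto)
  also have "\<dots> = (\<Sum>h\<in>?H. (\<Prod>i\<in>?I. a (fst (h i)) (snd (h i))) * signof (permof ?n h) * det ?Mm)"
    by (rule sum.inter_filter[symmetric], simp add: finite_PiE)
  also have "\<dots> = (\<Sum>p\<in>?P. (\<Prod>i\<in>?I. a (fst (hof m p i)) (snd (hof m p i))) * signof (permof ?n (hof m p)) * det ?Mm)"
    by (rule sum.reindex_bij_betw[OF hof_bij, symmetric])
  also have "\<dots> = (\<Sum>p\<in>?P. det ?Mm * (signof p * (\<Prod>i\<in>?I. a (p (2*i)) (p (2*i+1)))))"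
  proof (rule sum.cong[OF refl])
    fix p assume "p \<in> ?P"
    hence p: "p permutes {0..<?n}" by simp
    have pp: "permof ?n (hof m p) = p"
    proof
      fix j show "permof (2*m) (hof m p) j = p j"
        unfolding permof_def using colf_hof[of j m p] permutes_not_in[OF p, of j] by auto
    qed
    have "(\<Prod>i\<in>?I. a (fst (hof m p i)) (snd (hof m p i))) = (\<Prod>i\<in>?I. a (p (2*i)) (p (2*i+1)))"
      by (rule prod.cong[OF refl], simp add: hof_def)
    thus "(\<Prod>i\<in>?I. a (fst (hof m p i)) (snd (hof m p i))) * signof (permof ?n (hof m p)) * det ?Mm = det ?Mm * (signof p * (\<Prod>i\<in>?I. a (p (2*i)) (p (2*i+1))))"
      unfolding pp by simp
  qed
  also have "\<dots> = det ?Mm * pfs m a" unfolding pfs_def sum_distrib_left by simp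
  finally show ?thesis unfolding c_def .
qed

lemma pfaffian_carrier: "A \<in> carrier_mat (2*m) (2*m) \<Longrightarrow> pfaffian A = pfs m (\<lambda>i j. A $$ (i,j)) / (2 ^ m * fact m)"
  unfolding pfaffian_pfs by simp

lemma pfaffian_congruence:
  assumes M: "M \<in> carrier_mat (2*m) (2*m)" and A: "A \<in> carrier_mat (2*m) (2*m)"
  shows "pfaffian (M * A * transpose_mat M) = det M * pfaffian A"
proof -
  have C: "M * A * transpose_mat M \<in> carrier_mat (2*m) (2*m)" using M A by auto
  have "pfs m (\<lambda>i j. (M * A * transpose_mat M) $$ (i,j)) =
      pfs m (\<lambda>i j. \<Sum>k = 0..<2*m. (\<Sum>l = 0..<2*m. M $$ (i,l) * A $$ (l,k)) * M $$ (j,k))"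
  proof (rule pfs_cong)
    fix i j assume i: "i < 2*m" and j: "j < 2*m"
    show "(M * A * transpose_mat M) $$ (i,j) = (\<Sum>k = 0..<2*m. (\<Sum>l = 0..<2*m. M $$ (i,l) * A $$ (l,k)) * M $$ (j,k))"
    proof -
      have "(M * A * transpose_mat M) $$ (i,j) = (\<Sum>k = 0..<2*m. (M * A) $$ (i,k) * transpose_mat M $$ (k,j))"
        using M A i j by (subst index_mult_mat, auto simp: scalar_prod_def)
      also have "\<dots> = (\<Sum>k = 0..<2*m. (\<Sum>l = 0..<2*m. M $$ (i,l) * A $$ (l,k)) * M $$ (j,k))"
      proof (rule sum.cong[OF refl])
        fix k assume k: "k \<in> {0..<2*m}"
        have "(M * A) $$ (i,k) = (\<Sum>l = 0..<2*m. M $$ (i,l) * A $$ (l,k))"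
          using M A i k by (subst index_mult_mat, auto simp: scalar_prod_def)
        thus "(M * A) $$ (i,k) * transpose_mat M $$ (k,j) = (\<Sum>l = 0..<2*m. M $$ (i,l) * A $$ (l,k)) * M $$ (j,k)"
          using M j k by simp
      qed
      finally show ?thesis .
    qed
  qed
  also have "\<dots> = det (mat (2*m) (2*m) (\<lambda>(i,j). M $$ (i,j))) * pfs m (\<lambda>i j. A $$ (i,j))"
    by (rule pfs_congruence)
  also have "mat (2*m) (2*m) (\<lambda>(i,j). M $$ (i,j)) = M" using M by (intro eq_matI) auto
  finally show ?thesis unfolding pfaffian_carrier[OF C] pfaffian_carrier[OF A] by simp
qed

lemma pfaffian_block:
  assumes X: "X \<in> carrier_mat (2*a) (2*a)" and Y: "Y \<in> carrier_mat (2*b) (2*b)"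
  shows "pfaffian (four_block_mat X (0\<^sub>m (2*a) (2*b)) (0\<^sub>m (2*b) (2*a)) Y) = pfaffian X * pfaffian Y"
proof -
  let ?F = "four_block_mat X (0\<^sub>m (2*a) (2*b)) (0\<^sub>m (2*b) (2*a)) Y"
  have F: "?F \<in> carrier_mat (2*(a+b)) (2*(a+b))" using X Y four_block_carrier_mat[OF X Y] by (simp add: algebra_simps)
  have "pfs (a+b) (\<lambda>i j. ?F $$ (i,j)) = pfs (a+b) (bd (\<lambda>i j. X $$ (i,j)) (\<lambda>i j. Y $$ (i,j)) a)"
  proof (rule pfs_cong)
    fix i j assume "i < 2*(a+b)" "j < 2*(a+b)"
    thus "?F $$ (i,j) = bd (\<lambda>i j. X $$ (i,j)) (\<lambda>i j. Y $$ (i,j)) a i j"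
      using X Y unfolding bd_def by auto
  qed
  also have "\<dots> = real ((a+b) choose a) * pfs a (\<lambda>i j. X $$ (i,j)) * pfs b (\<lambda>i j. Y $$ (i,j))"
    by (rule pfs_block)
  finally have e: "pfs (a+b) (\<lambda>i j. ?F $$ (i,j)) = real ((a+b) choose a) * pfs a (\<lambda>i j. X $$ (i,j)) * pfs b (\<lambda>i j. Y $$ (i,j))" .
  have bin0: "fact a * fact b * ((a+b) choose a) = (fact (a+b) :: nat)"
    using binomial_fact_lemma[of a "a+b"] by simp
  have "real (fact a * fact b * ((a+b) choose a)) = real (fact (a+b))" using bin0 by simp
  hence bin: "real ((a+b) choose a) * fact a * fact b = fact (a+b)"
    unfolding of_nat_mult of_nat_fact by (simp add: ac_simps)
  have C0: "real ((a+b) choose a) \<noteq> 0" by simp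
  have den: "(2::real) ^ (a+b) * fact (a+b) = (2^a * fact a) * (2^b * fact b) * real ((a+b) choose a)"
    unfolding bin[symmetric] power_add by (simp add: ac_simps)
  show ?thesis
    unfolding pfaffian_carrier[OF F] pfaffian_carrier[OF X] pfaffian_carrier[OF Y] e den
    using C0 by (simp add: field_simps)
qed

lemma pfaffian_smult:
  assumes A: "A \<in> carrier_mat (2*m) (2*m)"
  shows "pfaffian (c \<cdot>\<^sub>m A) = c ^ m * pfaffian A"
proof -
  have C: "c \<cdot>\<^sub>m A \<in> carrier_mat (2*m) (2*m)" using A by simp
  have "pfs m (\<lambda>i j. (c \<cdot>\<^sub>m A) $$ (i,j)) = pfs m (\<lambda>i j. c * A $$ (i,j))"
    by (rule pfs_cong) (use A in simp)
  thus ?thesis unfolding pfaffian_carrier[OF C] pfaffian_carrier[OF A] pfs_scale by simp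
qed

lemma odd_neq_even: "2*x+1 \<noteq> 2*(y::nat)" by presburger

definition piof :: "nat \<Rightarrow> nat \<Rightarrow> nat" where
  "piof N r = (if r < N then 2*r else if r < 2*N then 2*(r-N)+1 else r)"

lemma piof_permutes: "piof N permutes {0..<2*N}"
proof (rule bij_imp_permutes)
  let ?S = "{0..<2*N}"
  have inj: "inj_on (piof N) ?S"
  proof (rule inj_onI)
    fix x y assume x: "x \<in> ?S" and y: "y \<in> ?S" and e: "piof N x = piof N y"
    show "x = y"
    proof (cases "x < N"; cases "y < N")
      assume "x < N" "y < N" thus ?thesis using e unfolding piof_def by auto
    next
      assume "x < N" "\<not> y < N" thus ?thesis using e y odd_neq_even[of "y-N" x] unfolding piof_def by auto
    next
      assume "\<not> x < N" "y < N" thus ?thesis using e x odd_neq_even[of "x-N" y] unfolding piof_def by auto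
    next
      assume "\<not> x < N" "\<not> y < N" thus ?thesis using e x y unfolding piof_def by auto
    qed
  qed
  have sub: "piof N ` ?S \<subseteq> ?S" unfolding piof_def by auto
  have "piof N ` ?S = ?S" by (rule endo_inj_surj[OF _ sub inj]) simp
  thus "bij_betw (piof N) ?S ?S" using inj unfolding bij_betw_def by simp
  show "\<And>x. x \<notin> ?S \<Longrightarrow> piof N x = x" unfolding piof_def by auto
qed

definition joff :: "nat \<Rightarrow> real mat" where
  "joff N = four_block_mat (0\<^sub>m N N) (1\<^sub>m N) (- 1\<^sub>m N) (0\<^sub>m N N)"

lemma joff_carrier: "joff N \<in> carrier_mat (2*N) (2*N)"
  unfolding joff_def using four_block_carrier_mat[of "0\<^sub>m N N" N N "0\<^sub>m N N" N N] by (simp add: mult_2)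

lemma jstd_even: "jstd (2*r) c = (if c = 2*r+1 then 1 else 0)"
  unfolding jstd_def by simp

lemma jstd_odd: "jstd (2*r+1) c = (if c = 2*r then -1 else 0)"
  unfolding jstd_def by simp

lemma joff_entry:
  assumes r: "r < 2*N" and c: "c < 2*N"
  shows "joff N $$ (r,c) = jstd (piof N r) (piof N c)"
proof -
  have J: "joff N $$ (r,c) = (if r < N then if c < N then 0 else (if r = c - N then 1 else 0)
     else if c < N then (if r - N = c then -1 else 0) else 0)"
    using r c unfolding joff_def by (simp add: mult_2)
  show ?thesis
  proof (cases "r < N"; cases "c < N")
    assume a: "r < N" "c < N"
    have p: "piof N r = 2*r" "piof N c = 2*c" using a unfolding piof_def by auto
    show ?thesis unfolding J p jstd_even using a odd_neq_even[of r c] by auto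
  next
    assume a: "r < N" "\<not> c < N"
    have p: "piof N r = 2*r" "piof N c = 2*(c-N)+1" using a c unfolding piof_def by auto
    show ?thesis unfolding J p jstd_even using a by auto
  next
    assume a: "\<not> r < N" "c < N"
    have p: "piof N r = 2*(r-N)+1" "piof N c = 2*c" using a r unfolding piof_def by auto
    show ?thesis unfolding J p jstd_odd using a by auto
  next
    assume a: "\<not> r < N" "\<not> c < N"
    have p: "piof N r = 2*(r-N)+1" "piof N c = 2*(c-N)+1" using a r c unfolding piof_def by auto
    show ?thesis unfolding J p jstd_odd using a odd_neq_even[of "c-N" "r-N"] by auto
  qed
qed

lemma pfaffian_joff: "pfaffian (joff N) \<noteq> 0"
proof -
  have "pfs N (\<lambda>i j. joff N $$ (i,j)) = pfs N (\<lambda>i j. jstd (piof N i) (piof N j))"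
    by (rule pfs_cong, rule joff_entry)
  also have "\<dots> = signof (piof N) * pfs N jstd" by (rule pfs_reindex[OF piof_permutes])
  finally have "pfs N (\<lambda>i j. joff N $$ (i,j)) \<noteq> 0"
    using pfs_jstd[of N] signof_pm_one[of "piof N"] by auto
  thus ?thesis unfolding pfaffian_carrier[OF joff_carrier] by simp
qed

lemma pfaffian_nonzero:
  assumes S: "S \<in> carrier_mat (2*k) (2*k)" and skew: "transpose_mat S = - S" and d: "det S \<noteq> 0"
  shows "pfaffian S \<noteq> 0"
proof
  assume pf0: "pfaffian S = 0"
  define N where "N = 2*k"
  have S': "S \<in> carrier_mat N N" using S N_def by simp
  define E where "E = four_block_mat S (1\<^sub>m N) S (- 1\<^sub>m N)"
  define T where "T = four_block_mat ((2::real) \<cdot>\<^sub>m S) (0\<^sub>m N N) (0\<^sub>m N N) ((-2::real) \<cdot>\<^sub>m S)"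
  have "E \<in> carrier_mat (N+N) (N+N)" unfolding E_def using S' by (intro four_block_carrier_mat) auto
  hence E: "E \<in> carrier_mat (2*N) (2*N)" by (simp add: mult_2)
  have J: "joff N \<in> carrier_mat (2*N) (2*N)" by (rule joff_carrier)
  have c0: "0\<^sub>m N N \<in> carrier_mat N N" and c1: "1\<^sub>m N \<in> carrier_mat N N"
    and c3: "- 1\<^sub>m N \<in> carrier_mat N N" and cS: "- S \<in> carrier_mat N N" using S' by auto
  have EJ: "E * joff N = four_block_mat (- 1\<^sub>m N) S (1\<^sub>m N) S"
    unfolding E_def joff_def
  proof (subst mult_four_block_mat[OF S' c1 S' c3 c0 c1 c3 c0], rule cong_four_block_mat)
    show "S * 0\<^sub>m N N + 1\<^sub>m N * - 1\<^sub>m N = - 1\<^sub>m N" using S' by (intro eq_matI) auto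
    show "S * 1\<^sub>m N + 1\<^sub>m N * 0\<^sub>m N N = S" using S' by (intro eq_matI) auto
    show "S * 0\<^sub>m N N + - 1\<^sub>m N * - 1\<^sub>m N = 1\<^sub>m N" using S' by (intro eq_matI) auto
    show "S * 1\<^sub>m N + - 1\<^sub>m N * 0\<^sub>m N N = S" using S' by (intro eq_matI) auto
  qed
  have ET: "transpose_mat E = four_block_mat (- S) (- S) (1\<^sub>m N) (- 1\<^sub>m N)"
    unfolding E_def by (subst transpose_four_block_mat[OF S' c1 S' c3], insert skew, simp add: transpose_uminus)
  have "E * joff N * transpose_mat E = T"
    unfolding EJ ET T_def
  proof (subst mult_four_block_mat[OF c3 S' c1 S' cS cS c1 c3], rule cong_four_block_mat)
    show "- 1\<^sub>m N * - S + S * 1\<^sub>m N = (2::real) \<cdot>\<^sub>m S" using S' by (intro eq_matI) auto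
    show "- 1\<^sub>m N * - S + S * - 1\<^sub>m N = 0\<^sub>m N N" using S' by (intro eq_matI) auto
    show "1\<^sub>m N * - S + S * 1\<^sub>m N = 0\<^sub>m N N" using S' by (intro eq_matI) auto
    show "1\<^sub>m N * - S + S * - 1\<^sub>m N = (-2::real) \<cdot>\<^sub>m S" using S' by (intro eq_matI) auto
  qed
  hence "pfaffian T = det E * pfaffian (joff N)" using pfaffian_congruence[OF E J] by simp
  moreover have "pfaffian T = pfaffian ((2::real) \<cdot>\<^sub>m S) * pfaffian ((-2::real) \<cdot>\<^sub>m S)"
    unfolding T_def N_def by (rule pfaffian_block, insert S, auto)
  moreover have "pfaffian ((2::real) \<cdot>\<^sub>m S) = 2^k * pfaffian S" by (rule pfaffian_smult[OF S])
  moreover have "det E = det ((-2::real) \<cdot>\<^sub>m S)"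
  proof -
    have "det E = det (S * (- 1\<^sub>m N) - 1\<^sub>m N * S)"
      unfolding E_def by (rule det_four_block_mat[OF S'], insert S', auto)
    also have "S * (- 1\<^sub>m N) - 1\<^sub>m N * S = (-2::real) \<cdot>\<^sub>m S" using S' by (intro eq_matI) auto
    finally show ?thesis .
  qed
  moreover have "det ((-2::real) \<cdot>\<^sub>m S) = (-2)^N * det S" using S' by simp
  ultimately have "(-2)^N * det S * pfaffian (joff N) = 0" using pf0 by simp
  thus False using d pfaffian_joff[of N] by simp
qed


lemma skew_entry:
  assumes "A \<in> carrier_mat N N" "transpose_mat A = - A" "i < N" "j < N"
  shows "A $$ (j,i) = - A $$ (i,j)"
proof -
  have "A $$ (j,i) = transpose_mat A $$ (i,j)" using assms(1,3,4) by simp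
  also have "\<dots> = (- A) $$ (i,j)" unfolding assms(2) ..
  also have "\<dots> = - A $$ (i,j)" using assms(1,3,4) by simp
  finally show ?thesis .
qed

lemma skew_from_entries:
  assumes "A \<in> carrier_mat N N" "\<And>i j. i < N \<Longrightarrow> j < N \<Longrightarrow> A $$ (j,i) = - A $$ (i,j)"
  shows "transpose_mat A = - A"
proof (rule eq_matI)
  fix i j assume "i < dim_row (- A)" "j < dim_col (- A)"
  thus "transpose_mat A $$ (i,j) = (- A) $$ (i,j)" using assms(1) assms(2)[of i j] by simp
qed (use assms(1) in auto)

lemma norm_pres:
  assumes P: "P \<in> carrier_mat N N" and PP: "transpose_mat P * P = 1\<^sub>m N" and v: "v \<in> carrier_vec N"
  shows "(P *\<^sub>v v) \<bullet> (P *\<^sub>v v) = v \<bullet> (v :: real vec)"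
proof -
  have "(P *\<^sub>v v) \<bullet> (P *\<^sub>v v) = (transpose_mat P *\<^sub>v (P *\<^sub>v v)) \<bullet> v"
    using transpose_vec_mult_scalar[OF P v, of "P *\<^sub>v v"] P v by simp
  also have "transpose_mat P *\<^sub>v (P *\<^sub>v v) = (transpose_mat P * P) *\<^sub>v v"
    by (rule assoc_mult_mat_vec[symmetric]) (use P v in auto)
  also have "\<dots> = v" unfolding PP using v by simp
  finally show ?thesis .
qed

lemma vec_self_zero:
  assumes v: "v \<in> carrier_vec N" and z: "v \<bullet> (v :: real vec) = 0"
  shows "v = 0\<^sub>v N"
proof -
  have "(\<Sum>i\<in>{0..<N}. v $ i * v $ i) = 0" using z v unfolding scalar_prod_def by simp
  hence "\<forall>i\<in>{0..<N}. v $ i * v $ i = 0" by (subst sum_nonneg_eq_0_iff[symmetric]) auto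
  thus ?thesis using v by (intro eq_vecI) auto
qed


lemma four_skew:
  assumes A: "A \<in> carrier_mat n n" and B: "B \<in> carrier_mat n n"
    and sA: "transpose_mat A = - A" and sB: "transpose_mat B = - B"
  shows "transpose_mat (four_block_mat A B B A) = - four_block_mat A B B A"
proof -
  have F: "four_block_mat A B B A \<in> carrier_mat (n+n) (n+n)" using A by (rule four_block_carrier_mat) (use A in auto)
  show ?thesis
  proof (rule skew_from_entries[OF F])
    fix i j assume i: "i < n+n" and j: "j < n+n"
    show "four_block_mat A B B A $$ (j,i) = - four_block_mat A B B A $$ (i,j)"
    proof (cases "i < n"; cases "j < n")
      assume "i < n" "j < n" thus ?thesis using A B skew_entry[OF A sA, of i j] by simp
    next
      assume "i < n" "\<not> j < n" thus ?thesis using A B i j skew_entry[OF B sB, of i "j-n"] by simp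
    next
      assume "\<not> i < n" "j < n" thus ?thesis using A B i j skew_entry[OF B sB, of "i-n" j] by simp
    next
      assume "\<not> i < n" "\<not> j < n" thus ?thesis using A B i j skew_entry[OF A sA, of "i-n" "j-n"] by simp
    qed
  qed
qed

theorem theorem4:
  fixes n :: nat and Rd Ro :: "real mat"
  assumes "Rd \<in> carrier_mat n n" and "Ro \<in> carrier_mat n n"
    and "skew_symmetric Rd" and "skew_symmetric Ro"
    and "unitary_real (four_block_mat Rd Ro Ro Rd)"
    and "pfaffian (four_block_mat Rd Ro Ro Rd) = -1"
  shows "det Rd = 0"
proof (rule ccontr)
  assume dne: "det Rd \<noteq> 0"
  note Rd = assms(1) and Ro = assms(2)
  have sRd: "transpose_mat Rd = - Rd" using assms(3) unfolding skew_symmetric_def .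
  have sRo: "transpose_mat Ro = - Ro" using assms(4) unfolding skew_symmetric_def .
  have Ro': "- Ro \<in> carrier_mat n n" using Ro by simp
  have sRo': "transpose_mat (- Ro) = - (- Ro)" by (simp add: transpose_uminus sRo)
  define R where "R = four_block_mat Rd Ro Ro Rd"
  define E where "E = four_block_mat Rd (- Ro) (- Ro) Rd"
  have "even n"
  proof (rule ccontr)
    assume odd: "odd n"
    have "det Rd = det (transpose_mat Rd)" using det_transpose[OF Rd] by simp
    also have "transpose_mat Rd = (-1::real) \<cdot>\<^sub>m Rd" unfolding sRd using Rd by (intro eq_matI) auto
    also have "det ((-1::real) \<cdot>\<^sub>m Rd) = (-1)^n * det Rd" using Rd by simp
    finally have "det Rd = - det Rd" using odd by simp
    thus False using dne by simp
  qed
  then obtain k where nk: "n = 2*k" by (metis evenE)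
  have "R \<in> carrier_mat (n+n) (n+n)" unfolding R_def by (rule four_block_carrier_mat[OF Rd Rd])
  hence R: "R \<in> carrier_mat (2*n) (2*n)" by (simp add: mult_2)
  have "E \<in> carrier_mat (n+n) (n+n)" unfolding E_def by (rule four_block_carrier_mat[OF Rd Rd])
  hence E: "E \<in> carrier_mat (2*n) (2*n)" by (simp add: mult_2)
  from assms(5) obtain k' where "R \<in> carrier_mat k' k'" "R * transpose_mat R = 1\<^sub>m k'"
    unfolding unitary_real_def R_def by auto
  hence RRT: "R * transpose_mat R = 1\<^sub>m (2*n)" using R by auto
  have sR: "transpose_mat R = - R" unfolding R_def by (rule four_skew[OF Rd Ro sRd sRo])
  have sE: "transpose_mat E = - E" unfolding E_def by (rule four_skew[OF Rd Ro' sRd sRo'])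
  have RTR: "transpose_mat R * R = 1\<^sub>m (2*n)"
  proof -
    have "transpose_mat R * R = R * transpose_mat R" unfolding sR using R by simp
    thus ?thesis using RRT by simp
  qed
  define D :: "real mat" where "D = four_block_mat (1\<^sub>m n) (0\<^sub>m n n) (0\<^sub>m n n) (- 1\<^sub>m n)"
  have c0: "(0\<^sub>m n n :: real mat) \<in> carrier_mat n n" and c1: "(1\<^sub>m n :: real mat) \<in> carrier_mat n n"
    and c3: "(- 1\<^sub>m n :: real mat) \<in> carrier_mat n n" by auto
  have "D \<in> carrier_mat (n+n) (n+n)" unfolding D_def by (rule four_block_carrier_mat[OF c1 c3])
  hence D: "D \<in> carrier_mat (2*n) (2*n)" by (simp add: mult_2)
  have DT: "transpose_mat D = D"
    unfolding D_def by (subst transpose_four_block_mat[OF c1 c0 c0 c3], simp add: transpose_uminus)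
  have DD: "D * D = 1\<^sub>m (2*n)"
  proof -
    have "D * D = four_block_mat (1\<^sub>m n) (0\<^sub>m n n) (0\<^sub>m n n) (1\<^sub>m n)"
      unfolding D_def
    proof (subst mult_four_block_mat[OF c1 c0 c0 c3 c1 c0 c0 c3], rule cong_four_block_mat)
      show "1\<^sub>m n * 1\<^sub>m n + 0\<^sub>m n n * 0\<^sub>m n n = (1\<^sub>m n :: real mat)" by (intro eq_matI) auto
      show "1\<^sub>m n * 0\<^sub>m n n + 0\<^sub>m n n * - 1\<^sub>m n = (0\<^sub>m n n :: real mat)" by (intro eq_matI) auto
      show "0\<^sub>m n n * 1\<^sub>m n + - 1\<^sub>m n * 0\<^sub>m n n = (0\<^sub>m n n :: real mat)" by (intro eq_matI) auto
      show "0\<^sub>m n n * 0\<^sub>m n n + - 1\<^sub>m n * - 1\<^sub>m n = (1\<^sub>m n :: real mat)" by (intro eq_matI) auto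
    qed
    also have "\<dots> = 1\<^sub>m (2*n)" by (simp add: mult_2)
    finally show ?thesis .
  qed
  have DRD: "D * R * D = E"
  proof -
    have DR: "D * R = four_block_mat Rd Ro (- Ro) (- Rd)"
      unfolding D_def R_def
    proof (subst mult_four_block_mat[OF c1 c0 c0 c3 Rd Ro Ro Rd], rule cong_four_block_mat)
      show "1\<^sub>m n * Rd + 0\<^sub>m n n * Ro = Rd" using Rd Ro by (intro eq_matI) auto
      show "1\<^sub>m n * Ro + 0\<^sub>m n n * Rd = Ro" using Rd Ro by (intro eq_matI) auto
      show "0\<^sub>m n n * Rd + - 1\<^sub>m n * Ro = - Ro" using Rd Ro by (intro eq_matI) auto
      show "0\<^sub>m n n * Ro + - 1\<^sub>m n * Rd = - Rd" using Rd Ro by (intro eq_matI) auto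
    qed
    have mRo: "- Ro \<in> carrier_mat n n" and mRd: "- Rd \<in> carrier_mat n n" using Rd Ro by auto
    show ?thesis
      unfolding DR unfolding D_def E_def
    proof (subst mult_four_block_mat[OF Rd Ro mRo mRd c1 c0 c0 c3], rule cong_four_block_mat)
      show "Rd * 1\<^sub>m n + Ro * 0\<^sub>m n n = Rd" using Rd Ro by (intro eq_matI) auto
      show "Rd * 0\<^sub>m n n + Ro * - 1\<^sub>m n = - Ro" using Rd Ro by (intro eq_matI) auto
      show "- Ro * 1\<^sub>m n + - Rd * 0\<^sub>m n n = - Ro" using Rd Ro by (intro eq_matI) auto
      show "- Ro * 0\<^sub>m n n + - Rd * - 1\<^sub>m n = Rd" using Rd Ro by (intro eq_matI) auto
    qed
  qed
  have DTD: "transpose_mat D * D = 1\<^sub>m (2*n)" unfolding DT by (rule DD)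
  have normE: "(E *\<^sub>v v) \<bullet> (E *\<^sub>v v) = v \<bullet> v" if v: "v \<in> carrier_vec (2*n)" for v
  proof -
    have DRc: "D * R \<in> carrier_mat (2*n) (2*n)" using D R by simp
    have Dv: "D *\<^sub>v v \<in> carrier_vec (2*n)" using D v by simp
    have "E *\<^sub>v v = (D * R) *\<^sub>v (D *\<^sub>v v)"
      unfolding DRD[symmetric] by (rule assoc_mult_mat_vec[OF DRc D v])
    also have "\<dots> = D *\<^sub>v (R *\<^sub>v (D *\<^sub>v v))" by (rule assoc_mult_mat_vec[OF D R Dv])
    finally have "E *\<^sub>v v = D *\<^sub>v (R *\<^sub>v (D *\<^sub>v v))" .
    hence "(E *\<^sub>v v) \<bullet> (E *\<^sub>v v) = (R *\<^sub>v (D *\<^sub>v v)) \<bullet> (R *\<^sub>v (D *\<^sub>v v))"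
      using norm_pres[OF D DTD, of "R *\<^sub>v (D *\<^sub>v v)"] R D v by simp
    also have "\<dots> = (D *\<^sub>v v) \<bullet> (D *\<^sub>v v)" using norm_pres[OF R RTR, of "D *\<^sub>v v"] D v by simp
    also have "\<dots> = v \<bullet> v" using norm_pres[OF D DTD v] .
    finally show ?thesis .
  qed
  have normR: "(R *\<^sub>v v) \<bullet> (R *\<^sub>v v) = v \<bullet> v" if v: "v \<in> carrier_vec (2*n)" for v
    using norm_pres[OF R RTR v] .
  define Rt where "Rt = (\<lambda>x::real. ((1+x)/2) \<cdot>\<^sub>m R + ((1-x)/2) \<cdot>\<^sub>m E)"
  have Rt: "Rt x \<in> carrier_mat (2*n) (2*n)" for x unfolding Rt_def using R E by auto
  have Rt_e: "Rt x $$ (i,j) = ((1+x)/2) * R $$ (i,j) + ((1-x)/2) * E $$ (i,j)" if "i < 2*n" "j < 2*n" for x i j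
    unfolding Rt_def using R E that by simp
  define g where "g = (\<lambda>x. pfaffian (Rt x))"
  have g_eq: "g x = pfs n (\<lambda>i j. ((1+x)/2) * R $$ (i,j) + ((1-x)/2) * E $$ (i,j)) / (2^n * fact n)" for x
  proof -
    have "pfs n (\<lambda>i j. Rt x $$ (i,j)) = pfs n (\<lambda>i j. ((1+x)/2) * R $$ (i,j) + ((1-x)/2) * E $$ (i,j))"
      by (rule pfs_cong, rule Rt_e)
    thus ?thesis unfolding g_def pfaffian_carrier[OF Rt] by simp
  qed
  have cont: "continuous_on {0..1} g"
    unfolding g_eq[abs_def] pfs_def by (intro continuous_intros) auto
  have g1: "g 1 = -1"
  proof -
    have "Rt 1 = R" using R E by (intro eq_matI) (auto simp: Rt_def)
    thus ?thesis unfolding g_def R_def using assms(6) by (simp add: R_def)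
  qed
  have g0: "g 0 > 0"
  proof -
    have Rd': "Rd \<in> carrier_mat (2*k) (2*k)" using Rd nk by simp
    have "Rt 0 = four_block_mat Rd (0\<^sub>m (2*k) (2*k)) (0\<^sub>m (2*k) (2*k)) Rd"
    proof (rule eq_matI)
      fix i j assume i: "i < dim_row (four_block_mat Rd (0\<^sub>m (2*k) (2*k)) (0\<^sub>m (2*k) (2*k)) Rd)"
        and j: "j < dim_col (four_block_mat Rd (0\<^sub>m (2*k) (2*k)) (0\<^sub>m (2*k) (2*k)) Rd)"
      have i': "i < 2*n" and j': "j < 2*n" using i j Rd' nk by auto
      show "Rt 0 $$ (i,j) = four_block_mat Rd (0\<^sub>m (2*k) (2*k)) (0\<^sub>m (2*k) (2*k)) Rd $$ (i,j)"
        unfolding Rt_e[OF i' j'] R_def E_def using i' j' Rd Ro nk by auto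
    qed (use Rt[of 0] Rd' nk in auto)
    hence "g 0 = pfaffian Rd * pfaffian Rd" unfolding g_def using pfaffian_block[OF Rd' Rd'] by simp
    moreover have "pfaffian Rd \<noteq> 0" by (rule pfaffian_nonzero[OF Rd' sRd dne])
    ultimately show ?thesis by (metis mult_eq_0_iff zero_le_square less_eq_real_def)
  qed
  obtain x where x0: "0 \<le> x" and x1: "x \<le> 1" and gx: "g x = 0"
    using IVT2'[of g 1 0 0, OF _ _ _ cont] g0 g1 by auto
  have xne0: "x \<noteq> 0" using gx g0 by auto
  have xne1: "x \<noteq> 1" using gx g1 by auto
  have sRt: "transpose_mat (Rt x) = - Rt x"
  proof (rule skew_from_entries[OF Rt])
    fix i j assume i: "i < 2*n" and j: "j < 2*n"
    show "Rt x $$ (j,i) = - Rt x $$ (i,j)"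
      unfolding Rt_e[OF i j] Rt_e[OF j i] skew_entry[OF R sR i j] skew_entry[OF E sE i j] by simp
  qed
  have "det (Rt x) = 0"
  proof (rule ccontr)
    assume "det (Rt x) \<noteq> 0"
    hence "pfaffian (Rt x) \<noteq> 0" by (rule pfaffian_nonzero[OF Rt sRt])
    thus False using gx unfolding g_def by simp
  qed
  then obtain v where v: "v \<in> carrier_vec (2*n)" and vne: "v \<noteq> 0\<^sub>v (2*n)" and kv: "Rt x *\<^sub>v v = 0\<^sub>v (2*n)"
    using det_0_iff_vec_prod_zero_field[OF Rt] by blast
  define al where "al = (1+x)/2"
  define be where "be = (1-x)/2"
  define a where "a = R *\<^sub>v v"
  define b where "b = E *\<^sub>v v"
  have a: "a \<in> carrier_vec (2*n)" and b: "b \<in> carrier_vec (2*n)" unfolding a_def b_def using R E v by auto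
  have comp: "al * a $ i = - (be * b $ i)" if i: "i < 2*n" for i
  proof -
    have "0 = (Rt x *\<^sub>v v) $ i" using kv i by simp
    also have "\<dots> = (\<Sum>j = 0..<2*n. Rt x $$ (i,j) * v $ j)" using Rt[of x] v i by (simp add: scalar_prod_def)
    also have "\<dots> = (\<Sum>j = 0..<2*n. al * (R $$ (i,j) * v $ j) + be * (E $$ (i,j) * v $ j))"
      by (rule sum.cong[OF refl]) (simp add: Rt_e[OF i] al_def be_def algebra_simps)
    also have "\<dots> = al * a $ i + be * b $ i"
      unfolding a_def b_def using R E v i by (simp add: scalar_prod_def sum.distrib sum_distrib_left)
    finally show ?thesis by simp
  qed
  have "al^2 * (a \<bullet> a) = be^2 * (b \<bullet> b)"
  proof -
    have "al^2 * (a \<bullet> a) = (\<Sum>i = 0..<2*n. (al * a $ i) * (al * a $ i))"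
      using a unfolding scalar_prod_def by (simp add: sum_distrib_left power2_eq_square algebra_simps)
    also have "\<dots> = (\<Sum>i = 0..<2*n. (be * b $ i) * (be * b $ i))"
      by (rule sum.cong[OF refl]) (simp add: comp)
    also have "\<dots> = be^2 * (b \<bullet> b)"
      using b unfolding scalar_prod_def by (simp add: sum_distrib_left power2_eq_square algebra_simps)
    finally show ?thesis .
  qed
  moreover have "a \<bullet> a = v \<bullet> v" unfolding a_def by (rule normR[OF v])
  moreover have "b \<bullet> b = v \<bullet> v" unfolding b_def by (rule normE[OF v])
  ultimately have "(al^2 - be^2) * (v \<bullet> v) = 0" by (simp add: algebra_simps)
  moreover have "al^2 - be^2 = x" unfolding al_def be_def by (simp add: power2_eq_square field_simps)
  ultimately have "v \<bullet> v = 0" using xne0 by simp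
  hence "v = 0\<^sub>v (2*n)" by (rule vec_self_zero[OF v])
  thus False using vne by simp
qed

end
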